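(* With the setup in the context, fix $X\subseteq E\setminus B$ and $Y\subseteq E$. Suppose the message $\mathbf{m}\in A^{E\setminus B}$ is chosen uniformly at random, and the transmitted word $\mathbf{w}\in C_{\mathbf{m}}$ is then chosen uniformly at random; let $\mathbf{M}=\mathbf{m}_X$ and $\mathbf{t}=\mathbf{w}_Y$. Then the conditional entropy (with logarithms to base $|A|$) $H(\mathbf{m}\mid\mathbf{t},\mathbf{M})=\sum_{\mathbf{M}\in A^X,\mathbf{t}\in A^Y}p(\mathbf{M},\mathbf{t})\sum_{\mathbf{m}\in A^{E\setminus B}}p(\mathbf{m}\mid\mathbf{t},\mathbf{M})\log_{|A|}\frac{1}{p(\mathbf{m}\mid\mathbf{t},\mathbf{M})}$ (with $0\log\frac10=0$) equals $n-k-|X|-\rho_X(Y)$.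
   Context: An almost affine code over a finite alphabet $A$ of length $n$ and dimension $k$ is a subset $C\subseteq A^n$ with $|C|=|A|^k$ such that for every $X\subseteq E=\{1,\dots,n\}$, $\log_{|A|}|C_X|$ is a nonnegative integer ($C_X$ = projection onto coordinates $X$); its associated matroid $M_C$ has rank function $r(X)=\log_{|A|}|C_X|$. Setup: $C$ is an almost affine code of length $n$ and dimension $k$ over $A$ with matroid rank function $r$; $B\subseteq E$ is a basis of $M_C$; $\varphi:A\times A\to A$ is such that for every $y\in A$ both $\varphi(y,\cdot)$ and $\varphi(\cdot,y)$ are bijections. For $\mathbf{m}\in A^{E\setminus B}$, $\Phi_{\mathbf{m}}(\mathbf{w})_i=\mathbf{w}_i$ for $i\in B$ and $=\varphi(\mathbf{w}_i,\mathbf{m}_i)$ for $i\in E\setminus B$, and $C_{\mathbf{m}}=\Phi_{\mathbf{m}}(C)$. For $X\subseteq E\setminus B$ and $\mathbf{M}\in A^X$, $D_{X,\mathbf{M}}=\bigcup_{\mathbf{m}_X=\mathbf{M}}C_{\mathbf{m}}$, an almost affine code with rank function $r_D(Y)=|Y\setminus(B\cup X)|+r(Y\cap(B\cup X))$ (independent of $\mathbf{M}$), and $\rho_X(Y)=r_D(Y)-r(Y)$. *)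

theory Defs
  imports "HOL-Probability.Probability"
begin

text \<open>Words of length n over the alphabet A are elements of PiE {1..n} (\<lambda>_. A).\<close>

definition proj :: "(nat \<Rightarrow> 'a) set \<Rightarrow> nat set \<Rightarrow> (nat \<Rightarrow> 'a) set" where
  "proj C X = (\<lambda>w. restrict w X) ` C"

definition almost_affine :: "'a set \<Rightarrow> nat \<Rightarrow> nat \<Rightarrow> (nat \<Rightarrow> 'a) set \<Rightarrow> bool" where
  "almost_affine A n k C \<longleftrightarrow>
     C \<subseteq> PiE {1..n} (\<lambda>_. A) \<and> card C = card A ^ k \<and>
     (\<forall>X \<subseteq> {1..n}. log (card A) (card (proj C X)) \<in> \<nat>)"

definition code_rank :: "'a set \<Rightarrow> (nat \<Rightarrow> 'a) set \<Rightarrow> nat set \<Rightarrow> real" where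
  "code_rank A C X = log (card A) (card (proj C X))"

definition is_basis :: "'a set \<Rightarrow> nat \<Rightarrow> (nat \<Rightarrow> 'a) set \<Rightarrow> nat set \<Rightarrow> bool" where
  "is_basis A n C B \<longleftrightarrow> B \<subseteq> {1..n} \<and> code_rank A C B = real (card B) \<and>
     (\<forall>B'. B \<subseteq> B' \<and> B' \<subseteq> {1..n} \<and> code_rank A C B' = real (card B') \<longrightarrow> B' = B)"

definition Phi :: "nat \<Rightarrow> nat set \<Rightarrow> ('a \<Rightarrow> 'a \<Rightarrow> 'a) \<Rightarrow> (nat \<Rightarrow> 'a) \<Rightarrow> (nat \<Rightarrow> 'a) \<Rightarrow> (nat \<Rightarrow> 'a)" where
  "Phi n B \<phi> m w = (\<lambda>i. if i \<in> B then w i else if i \<in> {1..n} then \<phi> (w i) (m i) else undefined)"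

definition Cm :: "nat \<Rightarrow> nat set \<Rightarrow> ('a \<Rightarrow> 'a \<Rightarrow> 'a) \<Rightarrow> (nat \<Rightarrow> 'a) set \<Rightarrow> (nat \<Rightarrow> 'a) \<Rightarrow> (nat \<Rightarrow> 'a) set" where
  "Cm n B \<phi> C m = Phi n B \<phi> m ` C"

definition rank_D :: "'a set \<Rightarrow> (nat \<Rightarrow> 'a) set \<Rightarrow> nat set \<Rightarrow> nat set \<Rightarrow> nat set \<Rightarrow> real" where
  "rank_D A C B X Y = real (card (Y - (B \<union> X))) + code_rank A C (Y \<inter> (B \<union> X))"

definition rho :: "'a set \<Rightarrow> (nat \<Rightarrow> 'a) set \<Rightarrow> nat set \<Rightarrow> nat set \<Rightarrow> nat set \<Rightarrow> real" where
  "rho A C B X Y = rank_D A C B X Y - code_rank A C Y"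

definition msg_word_pmf :: "'a set \<Rightarrow> nat \<Rightarrow> nat set \<Rightarrow> ('a \<Rightarrow> 'a \<Rightarrow> 'a) \<Rightarrow> (nat \<Rightarrow> 'a) set
    \<Rightarrow> ((nat \<Rightarrow> 'a) \<times> (nat \<Rightarrow> 'a)) pmf" where
  "msg_word_pmf A n B \<phi> C =
     do { m \<leftarrow> pmf_of_set (PiE ({1..n} - B) (\<lambda>_. A));
          w \<leftarrow> pmf_of_set (Cm n B \<phi> C m);
          return_pmf (m, w) }"

definition cond_entropy :: "'a set \<Rightarrow> nat \<Rightarrow> nat set \<Rightarrow> ('a \<Rightarrow> 'a \<Rightarrow> 'a) \<Rightarrow> (nat \<Rightarrow> 'a) set
    \<Rightarrow> nat set \<Rightarrow> nat set \<Rightarrow> real" where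
  "cond_entropy A n B \<phi> C X Y =
     (let P = msg_word_pmf A n B \<phi> C;
          pMt = (\<lambda>M t. measure_pmf.prob P {(m, w). restrict m X = M \<and> restrict w Y = t});
          pcond = (\<lambda>m M t. measure_pmf.prob P {(m', w). m' = m \<and> restrict m' X = M \<and> restrict w Y = t}
                             / pMt M t)
      in (\<Sum>M \<in> PiE X (\<lambda>_. A). \<Sum>t \<in> PiE Y (\<lambda>_. A).
            pMt M t * (\<Sum>m \<in> PiE ({1..n} - B) (\<lambda>_. A).
               (if pcond m M t = 0 then 0 else pcond m M t * log (card A) (1 / pcond m M t)))))"

end

theory Submission
  imports Defs
begin


lemma card_fiberwise:
  assumes "finite B" "finite A" "f ` B \<subseteq> A"
  shows "card B = (\<Sum>a\<in>A. card {x\<in>B. f x = a})"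
proof -
  have "(\<Sum>a\<in>A. sum (\<lambda>_. 1::nat) {x\<in>B. f x = a}) = sum (\<lambda>_. 1) B" by (rule sum.group[OF assms])
  thus ?thesis by (simp only: card_eq_sum)
qed

lemma entropy_uniform:
  fixes P :: "('m \<times> 'w) pmf" and g :: "'m \<Rightarrow> 'x" and h :: "'w \<Rightarrow> 'y" and b :: real
    and c1 c2 :: nat
  assumes fin: "finite S" and SP: "set_pmf P = S" and unif: "\<And>x. x \<in> S \<Longrightarrow> pmf P x = 1 / real (card S)"
    and finMSet: "finite MSet" and finXS: "finite XS" and finYS: "finite YS"
    and MSet: "\<And>m w. (m,w) \<in> S \<Longrightarrow> m \<in> MSet \<and> g m \<in> XS \<and> h w \<in> YS"
    and c1: "\<And>m w. (m,w) \<in> S \<Longrightarrow> card {(m',w')\<in>S. m' = m \<and> g m' = g m \<and> h w' = h w} = c1"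
    and c2: "\<And>m w. (m,w) \<in> S \<Longrightarrow> card {(m',w')\<in>S. g m' = g m \<and> h w' = h w} = c2"
    and pMt: "\<And>M t. pMt M t = measure_pmf.prob P {(m, w). g m = M \<and> h w = t}"
    and pcond: "\<And>m M t. pcond m M t = measure_pmf.prob P {(m', w). m' = m \<and> g m' = M \<and> h w = t} / pMt M t"
  shows "(\<Sum>M \<in> XS. \<Sum>t \<in> YS. pMt M t * (\<Sum>m \<in> MSet.
               (if pcond m M t = 0 then 0 else pcond m M t * log b (1 / pcond m M t))))
         = log b (real c2 / real c1)"
proof -
  have Sne: "S \<noteq> {}" using SP set_pmf_not_empty by blast
  hence cS: "card S > 0" using fin by (simp add: card_gt_0_iff)
  have prob: "measure_pmf.prob P Q = real (card (Q \<inter> S)) / real (card S)" for Q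
  proof -
    have "measure_pmf.prob P Q = measure_pmf.prob P (Q \<inter> S)"
      using measure_Int_set_pmf[of P Q] SP by simp
    also have "\<dots> = sum (pmf P) (Q \<inter> S)" using fin by (simp add: measure_measure_pmf_finite)
    also have "\<dots> = sum (\<lambda>_. 1 / real (card S)) (Q \<inter> S)" by (rule sum.cong) (auto simp: unif)
    finally show ?thesis by simp
  qed
  define N where "N M t = card {(m,w)\<in>S. g m = M \<and> h w = t}" for M t
  define N1 where "N1 m M t = card {(m',w)\<in>S. m' = m \<and> g m' = M \<and> h w = t}" for m M t
  have pN: "pMt M t = real (N M t) / real (card S)" for M t
    unfolding pMt prob N_def by (rule arg_cong[where f="\<lambda>x. real (card x) / _"]) auto
  have pN1: "pcond m M t = real (N1 m M t) / real (N M t)" for m M t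
  proof -
    have "measure_pmf.prob P {(m', w). m' = m \<and> g m' = M \<and> h w = t} = real (N1 m M t) / real (card S)"
      unfolding prob N1_def by (rule arg_cong[where f="\<lambda>x. real (card x) / _"]) auto
    thus ?thesis unfolding pcond pN using cS by simp
  qed
  have trm: "pMt M t * (\<Sum>m \<in> MSet. (if pcond m M t = 0 then 0 else pcond m M t * log b (1 / pcond m M t)))
        = real (N M t) / real (card S) * log b (real c2 / real c1)" for M t
  proof (cases "N M t = 0")
    case True then show ?thesis unfolding pN by simp
  next
    case False
    then have "{(m,w)\<in>S. g m = M \<and> h w = t} \<noteq> {}" unfolding N_def by (metis card.empty)
    then obtain m0 w0 where s0: "(m0,w0) \<in> S" "g m0 = M" "h w0 = t" by auto
    have NM: "N M t = c2" using c2[OF s0(1)] s0 unfolding N_def by simp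
    have c2pos: "c2 > 0" using False NM by simp
    have N1v: "N1 m M t = 0 \<or> N1 m M t = c1" for m
    proof (cases "N1 m M t = 0")
      case False
      then have "{(m',w)\<in>S. m' = m \<and> g m' = M \<and> h w = t} \<noteq> {}" unfolding N1_def by (metis card.empty)
      then obtain w1 where s1: "(m,w1) \<in> S" "g m = M" "h w1 = t" by auto
      show ?thesis using c1[OF s1(1)] s1 unfolding N1_def by simp
    qed simp
    have c1pos: "c1 > 0"
    proof -
      have "(m0,w0) \<in> {(m',w')\<in>S. m' = m0 \<and> g m' = g m0 \<and> h w' = h w0}" using s0(1) by simp
      moreover have "finite {(m',w')\<in>S. m' = m0 \<and> g m' = g m0 \<and> h w' = h w0}"
        by (rule finite_subset[OF _ fin]) auto
      ultimately have "card {(m',w')\<in>S. m' = m0 \<and> g m' = g m0 \<and> h w' = h w0} > 0"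
        by (subst card_gt_0_iff) blast
      thus ?thesis using c1[OF s0(1)] by simp
    qed
    have sumN1: "(\<Sum>m\<in>MSet. N1 m M t) = N M t"
    proof -
      have "N M t = (\<Sum>m\<in>MSet. card {x\<in>{(m,w)\<in>S. g m = M \<and> h w = t}. fst x = m})"
        unfolding N_def
        by (rule card_fiberwise) (use fin finMSet MSet in \<open>auto intro: finite_subset\<close>)
      also have "\<dots> = (\<Sum>m\<in>MSet. N1 m M t)" unfolding N1_def
        by (rule sum.cong[OF refl], rule arg_cong[where f=card]) auto
      finally show ?thesis by simp
    qed
    define K where "K = {m\<in>MSet. N1 m M t \<noteq> 0}"
    have "(\<Sum>m\<in>MSet. N1 m M t) = (\<Sum>m\<in>K. N1 m M t)"
      unfolding K_def by (rule sum.mono_neutral_right) (use finMSet in auto)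
    also have "\<dots> = (\<Sum>m\<in>K. c1)" by (rule sum.cong[OF refl]) (metis (mono_tags) K_def N1v mem_Collect_eq)
    also have "\<dots> = card K * c1" by simp
    finally have Kc: "card K * c1 = c2" using sumN1 NM by simp
    have "(\<Sum>m \<in> MSet. (if pcond m M t = 0 then 0 else pcond m M t * log b (1 / pcond m M t)))
        = (\<Sum>m \<in> MSet. (if m \<in> K then real c1 / real c2 * log b (real c2 / real c1) else 0))"
    proof (rule sum.cong[OF refl])
      fix m assume "m \<in> MSet"
      show "(if pcond m M t = 0 then 0 else pcond m M t * log b (1 / pcond m M t))
            = (if m \<in> K then real c1 / real c2 * log b (real c2 / real c1) else 0)"
      proof (cases "N1 m M t = 0")
        case True thus ?thesis unfolding pN1 K_def by simp
      next
        case False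
        hence "N1 m M t = c1" using N1v[of m] by auto
        thus ?thesis unfolding pN1 K_def using False c1pos c2pos NM \<open>m \<in> MSet\<close> by simp
      qed
    qed
    also have "\<dots> = (\<Sum>m \<in> K. real c1 / real c2 * log b (real c2 / real c1))"
      unfolding K_def by (rule sum.mono_neutral_cong_right) (use finMSet in auto)
    also have "\<dots> = real (card K) * (real c1 / real c2 * log b (real c2 / real c1))" by simp
    also have "\<dots> = log b (real c2 / real c1)"
    proof -
      have "real (card K) * real c1 = real c2" using Kc by (metis of_nat_mult)
      thus ?thesis using c2pos by (simp add: field_simps)
    qed
    finally show ?thesis unfolding pN by simp
  qed
  have total: "(\<Sum>M \<in> XS. \<Sum>t \<in> YS. N M t) = card S"
  proof -
    have "card S = (\<Sum>p\<in>XS \<times> YS. card {x\<in>S. (g (fst x), h (snd x)) = p})"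
      by (rule card_fiberwise) (use fin finXS finYS MSet in auto)
    also have "\<dots> = (\<Sum>M \<in> XS. \<Sum>t \<in> YS. card {x\<in>S. (g (fst x), h (snd x)) = (M,t)})"
      by (simp add: sum.cartesian_product case_prod_beta prod_eq_iff)
    also have "\<dots> = (\<Sum>M \<in> XS. \<Sum>t \<in> YS. N M t)" unfolding N_def
      by (intro sum.cong refl arg_cong[where f=card]) auto
    finally show ?thesis by simp
  qed
  define L where "L = log b (real c2 / real c1)"
  have e1: "(\<Sum>M \<in> XS. \<Sum>t \<in> YS. real (N M t) / real (card S) * L)
        = (\<Sum>M \<in> XS. \<Sum>t \<in> YS. real (N M t) * (L / real (card S)))"
    by (intro sum.cong refl) simp
  have e2: "(\<Sum>M \<in> XS. \<Sum>t \<in> YS. real (N M t) * (L / real (card S)))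
        = (\<Sum>M \<in> XS. \<Sum>t \<in> YS. real (N M t)) * (L / real (card S))"
    by (simp only: sum_distrib_right)
  have e3: "(\<Sum>M \<in> XS. \<Sum>t \<in> YS. real (N M t)) = real (card S)"
    using arg_cong[OF total, of real] by (simp only: of_nat_sum)
  have fin2: "(\<Sum>M \<in> XS. \<Sum>t \<in> YS. real (N M t) / real (card S) * L) = L"
    unfolding e1 e2 e3 using cS by simp
  show ?thesis unfolding trm by (rule fin2[unfolded L_def])
qed




locale aac =
  fixes A :: "'a set" and n k :: nat and C :: "(nat \<Rightarrow> 'a) set" and B :: "nat set"
    and \<phi> :: "'a \<Rightarrow> 'a \<Rightarrow> 'a"
  assumes finA: "finite A" and a2: "card A \<ge> 2"
    and aa: "almost_affine A n k C"
    and bas: "is_basis A n C B"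
    and phi: "\<forall>y \<in> A. bij_betw (\<lambda>x. \<phi> y x) A A \<and> bij_betw (\<lambda>x. \<phi> x y) A A"
begin

lemma C_sub: "C \<subseteq> PiE {1..n} (\<lambda>_. A)" using aa by (simp add: almost_affine_def)
lemma finC: "finite C" using C_sub finite_PiE[of "{1..n}" "\<lambda>_. A"] finA finite_subset by blast
lemma cardC: "card C = card A ^ k" using aa by (simp add: almost_affine_def)
lemma apos: "card A > 0" using a2 by simp
lemma Cne: "C \<noteq> {}" using cardC apos by (metis card.empty power_not_zero not_gr0)
lemma cA: "c \<in> C \<Longrightarrow> i \<in> {1..n} \<Longrightarrow> c i \<in> A" using C_sub by (auto simp: PiE_iff)
lemma cU: "c \<in> C \<Longrightarrow> i \<notin> {1..n} \<Longrightarrow> c i = undefined" using C_sub by (auto simp: PiE_iff extensional_def)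

lemma fin_proj: "finite (proj C Y)" unfolding proj_def using finC by simp
lemma proj_ne: "proj C Y \<noteq> {}" unfolding proj_def using Cne by simp

lemma proj_pow: assumes "Y \<subseteq> {1..n}" shows "\<exists>r. card (proj C Y) = card A ^ r"
proof -
  from aa assms have "log (card A) (card (proj C Y)) \<in> \<nat>" by (simp add: almost_affine_def)
  then obtain r where r: "log (card A) (card (proj C Y)) = real r" by (auto elim: Nats_cases)
  have pos: "real (card (proj C Y)) > 0" using fin_proj proj_ne by (simp add: card_gt_0_iff)
  have "real (card (proj C Y)) = real (card A) powr (log (card A) (card (proj C Y)))"
    using pos a2 by (subst powr_log_cancel) auto
  also have "\<dots> = real (card A) ^ r" using r apos by (simp add: powr_realpow)
  finally have "card (proj C Y) = card A ^ r" by (metis of_nat_eq_iff of_nat_power)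
  thus ?thesis by blast
qed

lemma step:
  assumes Y: "Y \<subseteq> {1..n}" and j: "j \<in> {1..n}" "j \<notin> Y"
  shows "(card (proj C (insert j Y)) = card (proj C Y) \<and> (\<forall>c\<in>C. \<forall>c'\<in>C. (\<forall>i\<in>Y. c' i = c i) \<longrightarrow> c' j = c j))
       \<or> (card (proj C (insert j Y)) = card A * card (proj C Y) \<and> (\<forall>c\<in>C. \<forall>v\<in>A. \<exists>c'\<in>C. (\<forall>i\<in>Y. c' i = c i) \<and> c' j = v))"
proof -
  let ?P = "proj C Y" let ?Q = "proj C (insert j Y)"
  have PQ: "?P = (\<lambda>w. restrict w Y) ` ?Q"
    unfolding proj_def image_image restrict_restrict by (simp add: Int_absorb1 subset_insertI)
  have le1: "card ?P \<le> card ?Q" unfolding PQ by (rule card_image_le[OF fin_proj])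
  define gg where "gg w = (restrict w Y, w j)" for w :: "nat \<Rightarrow> 'a"
  have inj: "inj_on gg ?Q"
  proof (rule inj_onI)
    fix w w' assume w: "w \<in> ?Q" and w': "w' \<in> ?Q" and e: "gg w = gg w'"
    from w obtain c where c: "w = restrict c (insert j Y)" unfolding proj_def by auto
    from w' obtain c' where c': "w' = restrict c' (insert j Y)" unfolding proj_def by auto
    from e have e1: "\<And>i. i \<in> Y \<Longrightarrow> w i = w' i" and e2: "w j = w' j"
      unfolding gg_def by (auto simp: fun_eq_iff restrict_def split: if_splits)
    show "w = w'"
    proof
      fix i show "w i = w' i" using e1 e2 c c' by (cases "i \<in> insert j Y") auto
    qed
  qed
  have sub: "gg ` ?Q \<subseteq> ?P \<times> A"
  proof
    fix x assume "x \<in> gg ` ?Q"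
    then obtain c where c: "c \<in> C" "x = gg (restrict c (insert j Y))" unfolding proj_def by auto
    have "restrict c Y \<in> ?P" using c(1) unfolding proj_def by auto
    moreover have "c j \<in> A" using cA[OF c(1) j(1)] .
    ultimately show "x \<in> ?P \<times> A" using c(2) unfolding gg_def
      by (simp add: restrict_restrict Int_absorb1 subset_insertI)
  qed
  have finPA: "finite (?P \<times> A)" using fin_proj finA by simp
  have le2: "card ?Q \<le> card A * card ?P"
    using card_inj_on_le[OF inj sub finPA] by (simp add: card_cartesian_product mult.commute)
  obtain r where r: "card ?P = card A ^ r" using proj_pow[OF Y] by blast
  obtain r' where r': "card ?Q = card A ^ r'" using proj_pow[of "insert j Y"] Y j by auto
  have a1: "1 < card A" using a2 by simp
  have "r \<le> r'" using le1 r r' power_le_imp_le_exp[OF a1] by metis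
  moreover have "r' \<le> Suc r" using le2 r r' power_le_imp_le_exp[OF a1, of r' "Suc r"] by simp
  ultimately have "r' = r \<or> r' = Suc r" by linarith
  thus ?thesis
  proof
    assume "r' = r"
    hence eqc: "card ?Q = card ?P" using r r' by simp
    have injr: "inj_on (\<lambda>w. restrict w Y) ?Q"
      by (rule eq_card_imp_inj_on[OF fin_proj]) (use eqc PQ in simp)
    have "\<forall>c\<in>C. \<forall>c'\<in>C. (\<forall>i\<in>Y. c' i = c i) \<longrightarrow> c' j = c j"
    proof (intro ballI impI)
      fix c c' assume c: "c \<in> C" and c': "c' \<in> C" and ag: "\<forall>i\<in>Y. c' i = c i"
      have m1: "restrict c (insert j Y) \<in> ?Q" "restrict c' (insert j Y) \<in> ?Q"
        using c c' unfolding proj_def by auto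
      have "restrict (restrict c' (insert j Y)) Y = restrict (restrict c (insert j Y)) Y"
        using ag by (auto simp: restrict_def fun_eq_iff)
      hence "restrict c' (insert j Y) = restrict c (insert j Y)"
        using inj_onD[OF injr _ m1(2) m1(1)] by blast
      thus "c' j = c j" by (metis insertI1 restrict_apply')
    qed
    thus ?thesis using eqc by blast
  next
    assume "r' = Suc r"
    hence eqc: "card ?Q = card A * card ?P" using r r' by simp
    have full: "gg ` ?Q = ?P \<times> A"
    proof (rule card_subset_eq[OF finPA sub])
      show "card (gg ` ?Q) = card (?P \<times> A)"
        using card_image[OF inj] eqc by (simp add: card_cartesian_product mult.commute)
    qed
    have "\<forall>c\<in>C. \<forall>v\<in>A. \<exists>c'\<in>C. (\<forall>i\<in>Y. c' i = c i) \<and> c' j = v"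
    proof (intro ballI)
      fix c v assume c: "c \<in> C" and v: "v \<in> A"
      have "(restrict c Y, v) \<in> ?P \<times> A" using c v unfolding proj_def by auto
      then obtain w where w: "w \<in> ?Q" "gg w = (restrict c Y, v)" using full by (metis imageE)
      then obtain c' where c': "c' \<in> C" "w = restrict c' (insert j Y)" unfolding proj_def by auto
      have "\<forall>i\<in>Y. c' i = c i"
      proof
        fix i assume i: "i \<in> Y"
        have "restrict w Y i = restrict c Y i" using w(2) unfolding gg_def by simp
        thus "c' i = c i" using i c'(2) by simp
      qed
      moreover have "c' j = v" using w(2) c'(2) unfolding gg_def by simp
      ultimately show "\<exists>c'\<in>C. (\<forall>i\<in>Y. c' i = c i) \<and> c' j = v" using c'(1) by blast
    qed
    thus ?thesis using eqc by blast
  qed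
qed


lemma PiE_restr: "c \<in> C \<Longrightarrow> restrict c {1..n} = c"
  using C_sub by (auto intro: PiE_restrict)

lemma fiber_aux:
  "\<forall>Y c. card ({1..n} - Y) = d \<longrightarrow> Y \<subseteq> {1..n} \<longrightarrow> c \<in> C \<longrightarrow>
     card {c'\<in>C. \<forall>i\<in>Y. c' i = c i} * card (proj C Y) = card C"
proof (induction d)
  case 0
  show ?case
  proof (intro allI impI)
    fix Y c assume d: "card ({1..n} - Y) = 0" and Y: "Y \<subseteq> {1..n}" and c: "c \<in> C"
    have YE: "Y = {1..n}" using d Y by auto
    have f1: "{c'\<in>C. \<forall>i\<in>Y. c' i = c i} = {c}"
    proof
      show "{c'\<in>C. \<forall>i\<in>Y. c' i = c i} \<subseteq> {c}"
      proof
        fix c' assume "c' \<in> {c'\<in>C. \<forall>i\<in>Y. c' i = c i}"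
        hence c': "c' \<in> C" "\<forall>i\<in>{1..n}. c' i = c i" using YE by auto
        have "c' = c"
        proof
          fix i show "c' i = c i"
          proof (cases "i \<in> {1..n}")
            case True thus ?thesis using c' by auto
          next
            case False thus ?thesis using cU[OF c'(1) False] cU[OF c False] by simp
          qed
        qed
        thus "c' \<in> {c}" by simp
      qed
    qed (use c in auto)
    have "(\<lambda>w. restrict w {1..n}) ` C = (\<lambda>w. w) ` C" by (rule image_cong[OF refl], rule PiE_restr)
    hence "proj C Y = C" by (simp add: proj_def YE)
    thus "card {c'\<in>C. \<forall>i\<in>Y. c' i = c i} * card (proj C Y) = card C" using f1 by simp
  qed
next
  case (Suc d)
  show ?case
  proof (intro allI impI)
    fix Y c assume d: "card ({1..n} - Y) = Suc d" and Y: "Y \<subseteq> {1..n}" and c: "c \<in> C"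
    have "{1..n} - Y \<noteq> {}" using d by (metis card.empty nat.distinct(1))
    then obtain j where j: "j \<in> {1..n}" "j \<notin> Y" by blast
    have d': "card ({1..n} - insert j Y) = d"
    proof -
      have "{1..n} - insert j Y = ({1..n} - Y) - {j}" by auto
      thus ?thesis using d j by simp
    qed
    have Y': "insert j Y \<subseteq> {1..n}" using Y j by auto
    have IH: "\<And>c. c \<in> C \<Longrightarrow> card {c'\<in>C. \<forall>i\<in>insert j Y. c' i = c i} * card (proj C (insert j Y)) = card C"
      using Suc.IH d' Y' by blast
    from step[OF Y j] show "card {c'\<in>C. \<forall>i\<in>Y. c' i = c i} * card (proj C Y) = card C"
    proof
      assume H: "card (proj C (insert j Y)) = card (proj C Y) \<and> (\<forall>c\<in>C. \<forall>c'\<in>C. (\<forall>i\<in>Y. c' i = c i) \<longrightarrow> c' j = c j)"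
      have "{c'\<in>C. \<forall>i\<in>Y. c' i = c i} = {c'\<in>C. \<forall>i\<in>insert j Y. c' i = c i}"
        using H c by auto
      thus ?thesis using IH[OF c] H by simp
    next
      assume H: "card (proj C (insert j Y)) = card A * card (proj C Y) \<and> (\<forall>c\<in>C. \<forall>v\<in>A. \<exists>c'\<in>C. (\<forall>i\<in>Y. c' i = c i) \<and> c' j = v)"
      define q where "q = card C div card (proj C (insert j Y))"
      have pQ: "card (proj C (insert j Y)) > 0" using fin_proj proj_ne by (simp add: card_gt_0_iff)
      have piece: "card {c'\<in>C. (\<forall>i\<in>Y. c' i = c i) \<and> c' j = v} = q" if v: "v \<in> A" for v
      proof -
        obtain cv where cv: "cv \<in> C" "\<forall>i\<in>Y. cv i = c i" "cv j = v" using H c v by blast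
        have "{c'\<in>C. (\<forall>i\<in>Y. c' i = c i) \<and> c' j = v} = {c'\<in>C. \<forall>i\<in>insert j Y. c' i = cv i}"
          using cv by auto
        moreover have "card {c'\<in>C. \<forall>i\<in>insert j Y. c' i = cv i} = q"
          unfolding q_def using pQ by (simp flip: IH[OF cv(1)])
        ultimately show ?thesis by simp
      qed
      have U: "{c'\<in>C. \<forall>i\<in>Y. c' i = c i} = (\<Union>v\<in>A. {c'\<in>C. (\<forall>i\<in>Y. c' i = c i) \<and> c' j = v})"
        using cA j(1) by auto
      have "card {c'\<in>C. \<forall>i\<in>Y. c' i = c i} = (\<Sum>v\<in>A. card {c'\<in>C. (\<forall>i\<in>Y. c' i = c i) \<and> c' j = v})"
        unfolding U by (rule card_UN_disjoint) (use finA finC in auto)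
      also have "\<dots> = card A * q" using piece by simp
      finally have "card {c'\<in>C. \<forall>i\<in>Y. c' i = c i} * card (proj C Y) = q * card (proj C (insert j Y))"
        using H by simp
      also have "\<dots> = card C" unfolding q_def using pQ by (simp flip: IH[OF c])
      finally show ?thesis .
    qed
  qed
qed

lemma fiber: "Y \<subseteq> {1..n} \<Longrightarrow> c \<in> C \<Longrightarrow> card {c'\<in>C. \<forall>i\<in>Y. c' i = c i} * card (proj C Y) = card C"
  using fiber_aux[of "card ({1..n} - Y)"] by blast

lemma B_sub: "B \<subseteq> {1..n}" using bas by (simp add: is_basis_def)

lemma cardB: "card B = k"
proof -
  have rB: "log (card A) (card (proj C B)) = real (card B)" using bas by (simp add: is_basis_def code_rank_def)
  have max: "\<And>B'. B \<subseteq> B' \<Longrightarrow> B' \<subseteq> {1..n} \<Longrightarrow> log (card A) (card (proj C B')) = real (card B') \<Longrightarrow> B' = B"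
    using bas by (simp add: is_basis_def code_rank_def)
  have a1: "real (card A) > 1" using a2 by simp
  have pB: "card (proj C B) = card A ^ card B"
  proof -
    obtain r where r: "card (proj C B) = card A ^ r" using proj_pow[OF B_sub] by blast
    have "log (card A) (real (card A ^ r)) = real r" using a1 by (simp add: log_nat_power)
    thus ?thesis using r rB by simp
  qed
  have det: "\<forall>c\<in>C. \<forall>c'\<in>C. (\<forall>i\<in>B. c' i = c i) \<longrightarrow> c' j = c j" if j: "j \<in> {1..n}" "j \<notin> B" for j
  proof -
    from step[OF B_sub j] show ?thesis
    proof
      assume H: "card (proj C (insert j B)) = card A * card (proj C B) \<and> (\<forall>c\<in>C. \<forall>v\<in>A. \<exists>c'\<in>C. (\<forall>i\<in>B. c' i = c i) \<and> c' j = v)"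
      have "card (proj C (insert j B)) = card A ^ card (insert j B)"
        using H pB j finite_subset[OF B_sub] by simp
      hence "log (card A) (card (proj C (insert j B))) = real (card (insert j B))"
        using a1 by (simp add: log_nat_power)
      hence "insert j B = B" using max[of "insert j B"] B_sub j by auto
      thus ?thesis using j by auto
    qed blast
  qed
  have "inj_on (\<lambda>c. restrict c B) C"
  proof (rule inj_onI)
    fix c c' assume c: "c \<in> C" and c': "c' \<in> C" and e: "restrict c B = restrict c' B"
    hence ag: "\<forall>i\<in>B. c' i = c i" by (metis restrict_apply')
    show "c = c'"
    proof
      fix i show "c i = c' i"
      proof (cases "i \<in> {1..n}")
        case True
        show ?thesis
        proof (cases "i \<in> B")
          case iB: True thus ?thesis using ag by simp
        next
          case iB: False
          have "c' i = c i" using det[OF True iB] c c' ag by blast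
          thus ?thesis by simp
        qed
      next
        case False thus ?thesis using cU[OF c' False] cU[OF c False] by simp
      qed
    qed
  qed
  hence "card (proj C B) = card C" unfolding proj_def by (simp add: card_image)
  hence "card A ^ card B = card A ^ k" using pB cardC by simp
  thus ?thesis using a2 by (simp add: power_inject_exp)
qed

end



lemma res_eq: "restrict f Y = restrict g Y \<longleftrightarrow> (\<forall>i\<in>Y. f i = g i)"
  by (auto simp: restrict_def fun_eq_iff)

context aac begin

definition "Ms = PiE ({1..n} - B) (\<lambda>_. A)"
definition "SS = Sigma Ms (\<lambda>m. Cm n B \<phi> C m)"

lemma finMs: "finite Ms" unfolding Ms_def using finA by (simp add: finite_PiE)
lemma Ane: "A \<noteq> {}" using a2 by auto
lemma Ms_ne: "Ms \<noteq> {}" unfolding Ms_def using Ane by (simp add: PiE_eq_empty_iff)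
lemma mA: "m \<in> Ms \<Longrightarrow> i \<in> {1..n} - B \<Longrightarrow> m i \<in> A" unfolding Ms_def by (auto simp: PiE_iff)

lemma phi_inj2: "y \<in> A \<Longrightarrow> x \<in> A \<Longrightarrow> x' \<in> A \<Longrightarrow> \<phi> x y = \<phi> x' y \<Longrightarrow> x = x'"
  using phi by (meson bij_betw_def inj_onD)
lemma phi_A: "x \<in> A \<Longrightarrow> y \<in> A \<Longrightarrow> \<phi> x y \<in> A"
  using phi by (meson bij_betw_apply)
lemma phi_solve: assumes "x \<in> A" "z \<in> A" shows "card {v\<in>A. \<phi> x v = z} = 1"
proof -
  have b: "bij_betw (\<lambda>v. \<phi> x v) A A" using phi assms(1) by blast
  then obtain v where v: "v \<in> A" "\<phi> x v = z" using assms(2) by (metis bij_betw_def imageE)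
  have "{v\<in>A. \<phi> x v = z} = {v}"
    using v b by (auto simp: bij_betw_def dest: inj_onD)
  thus ?thesis by simp
qed

lemma Phi_A: "m \<in> Ms \<Longrightarrow> c \<in> C \<Longrightarrow> i \<in> {1..n} \<Longrightarrow> Phi n B \<phi> m c i \<in> A"
  unfolding Phi_def using cA mA phi_A by auto

lemma Phi_agree: assumes "m \<in> Ms" "c \<in> C" "c' \<in> C" "i \<in> {1..n}"
  shows "(Phi n B \<phi> m c' i = Phi n B \<phi> m c i) = (c' i = c i)"
proof (cases "i \<in> B")
  case True thus ?thesis by (simp add: Phi_def)
next
  case False
  hence "m i \<in> A" using mA assms by auto
  thus ?thesis using False assms phi_inj2[of "m i" "c' i" "c i"] cA by (auto simp: Phi_def)
qed

lemma Phi_inj: assumes "m \<in> Ms" shows "inj_on (Phi n B \<phi> m) C"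
proof (rule inj_onI)
  fix c c' assume c: "c \<in> C" and c': "c' \<in> C" and e: "Phi n B \<phi> m c = Phi n B \<phi> m c'"
  show "c = c'"
  proof
    fix i show "c i = c' i"
    proof (cases "i \<in> {1..n}")
      case True thus ?thesis using Phi_agree[OF assms c' c True] e by simp
    next
      case False thus ?thesis using cU[OF c False] cU[OF c' False] by simp
    qed
  qed
qed

lemma card_Cm: "m \<in> Ms \<Longrightarrow> card (Cm n B \<phi> C m) = card C"
  unfolding Cm_def using Phi_inj by (simp add: card_image)

lemma finSS: "finite SS" unfolding SS_def Cm_def using finMs finC by auto

lemma card_SS: "card SS = card Ms * card C"
proof -
  have "card SS = (\<Sum>m\<in>Ms. card (Cm n B \<phi> C m))" unfolding SS_def
    by (rule card_SigmaI) (use finMs finC in \<open>auto simp: Cm_def\<close>)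
  also have "\<dots> = (\<Sum>m\<in>Ms. card C)" by (rule sum.cong) (auto simp: card_Cm)
  finally show ?thesis by simp
qed

lemma Cm_ne: "Cm n B \<phi> C m \<noteq> {}" unfolding Cm_def using Cne by simp
lemma finCm: "finite (Cm n B \<phi> C m)" unfolding Cm_def using finC by simp

lemma set_P: "set_pmf (msg_word_pmf A n B \<phi> C) = SS"
  unfolding msg_word_pmf_def SS_def Ms_def[symmetric]
  using finMs Ms_ne finCm Cm_ne by (auto simp: set_bind_pmf)

lemma pmf_P: assumes x: "x \<in> SS" shows "pmf (msg_word_pmf A n B \<phi> C) x = 1 / real (card SS)"
proof -
  obtain m0 w0 where x0: "x = (m0, w0)" by fastforce
  have m0: "m0 \<in> Ms" "w0 \<in> Cm n B \<phi> C m0" using x x0 unfolding SS_def by auto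
  have inner: "pmf (bind_pmf (pmf_of_set (Cm n B \<phi> C m)) (\<lambda>w. return_pmf (m, w))) x
      = (if m = m0 then 1 / real (card C) else 0)" if m: "m \<in> Ms" for m
  proof -
    have "pmf (bind_pmf (pmf_of_set (Cm n B \<phi> C m)) (\<lambda>w. return_pmf (m, w))) x
        = (\<Sum>w\<in>Cm n B \<phi> C m. pmf (return_pmf (m, w)) x) / real (card (Cm n B \<phi> C m))"
      by (rule pmf_bind_pmf_of_set[OF Cm_ne finCm])
    also have "(\<Sum>w\<in>Cm n B \<phi> C m. pmf (return_pmf (m, w)) x) = (\<Sum>w\<in>Cm n B \<phi> C m. if w = w0 then (if m = m0 then 1 else 0) else 0)"
      by (rule sum.cong) (auto simp: x0 indicator_def)
    also have "\<dots> = (if w0 \<in> Cm n B \<phi> C m then (if m = m0 then 1 else 0) else 0)"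
      using finCm by (simp add: sum.delta')
    finally show ?thesis using m0 card_Cm[OF m] by auto
  qed
  have "pmf (msg_word_pmf A n B \<phi> C) x
      = (\<Sum>m\<in>Ms. pmf (bind_pmf (pmf_of_set (Cm n B \<phi> C m)) (\<lambda>w. return_pmf (m, w))) x) / real (card Ms)"
    unfolding msg_word_pmf_def Ms_def[symmetric] by (rule pmf_bind_pmf_of_set[OF Ms_ne finMs])
  also have "(\<Sum>m\<in>Ms. pmf (bind_pmf (pmf_of_set (Cm n B \<phi> C m)) (\<lambda>w. return_pmf (m, w))) x)
      = (\<Sum>m\<in>Ms. if m = m0 then 1 / real (card C) else 0)" by (rule sum.cong) (auto simp: inner)
  also have "\<dots> = 1 / real (card C)" using m0 finMs by (simp add: sum.delta')
  finally show ?thesis by (simp add: card_SS)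
qed

end



context aac begin

lemma SS_mem: "(m,w) \<in> SS \<longleftrightarrow> m \<in> Ms \<and> (\<exists>c\<in>C. w = Phi n B \<phi> m c)"
  unfolding SS_def Cm_def by auto

lemma proj_pos: "card (proj C Y) > 0" using fin_proj proj_ne by (simp add: card_gt_0_iff)

lemma c1_lem: assumes Y: "Y \<subseteq> {1..n}" and mw: "(m,w) \<in> SS"
  shows "card {(m',w')\<in>SS. m' = m \<and> restrict m' X = restrict m X \<and> restrict w' Y = restrict w Y}
         = card C div card (proj C Y)"
proof -
  obtain c where m: "m \<in> Ms" and c: "c \<in> C" and w: "w = Phi n B \<phi> m c" using mw SS_mem by blast
  let ?F = "{c'\<in>C. \<forall>i\<in>Y. c' i = c i}"
  have agr: "c' \<in> C \<Longrightarrow> (restrict (Phi n B \<phi> m c') Y = restrict w Y) = (\<forall>i\<in>Y. c' i = c i)" for c'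
  proof -
    assume c': "c' \<in> C"
    have "\<And>i. i \<in> Y \<Longrightarrow> (Phi n B \<phi> m c' i = Phi n B \<phi> m c i) = (c' i = c i)"
      using Phi_agree[OF m c c'] Y by blast
    thus ?thesis unfolding res_eq w by blast
  qed
  have eq: "{(m',w')\<in>SS. m' = m \<and> restrict m' X = restrict m X \<and> restrict w' Y = restrict w Y}
      = (\<lambda>c'. (m, Phi n B \<phi> m c')) ` ?F" (is "?L = ?R")
  proof (rule set_eqI, rule iffI)
    fix x assume "x \<in> ?L"
    then obtain w' where x: "x = (m, w')" "(m,w') \<in> SS" "restrict w' Y = restrict w Y" by auto
    then obtain c' where c': "c' \<in> C" "w' = Phi n B \<phi> m c'" using SS_mem by blast
    have "\<forall>i\<in>Y. c' i = c i" using agr[OF c'(1)] x(3) c'(2) by simp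
    hence "c' \<in> ?F" using c'(1) by simp
    thus "x \<in> ?R" using x(1) c'(2) by blast
  next
    fix x assume "x \<in> ?R"
    then obtain c' where c': "c' \<in> ?F" "x = (m, Phi n B \<phi> m c')" by auto
    have c'C: "c' \<in> C" and ag: "\<forall>i\<in>Y. c' i = c i" using c'(1) by auto
    have "(m, Phi n B \<phi> m c') \<in> SS" using SS_mem m c'C by blast
    moreover have "restrict (Phi n B \<phi> m c') Y = restrict w Y" using agr[OF c'C] ag by simp
    ultimately show "x \<in> ?L" using c'(2) by simp
  qed
  have inj: "inj_on (\<lambda>c'. (m, Phi n B \<phi> m c')) ?F"
  proof (rule inj_onI)
    fix a b assume a: "a \<in> ?F" and b: "b \<in> ?F" and e: "(m, Phi n B \<phi> m a) = (m, Phi n B \<phi> m b)"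
    hence "Phi n B \<phi> m a = Phi n B \<phi> m b" by simp
    thus "a = b" using inj_onD[OF Phi_inj[OF m]] a b by blast
  qed
  have "card ?F * card (proj C Y) = card C" by (rule fiber[OF Y c])
  hence "card ?F = card C div card (proj C Y)" using proj_pos[of Y] by (simp flip: fiber[OF Y c])
  thus ?thesis unfolding eq using card_image[OF inj] by simp
qed


lemma c2_lem: assumes X: "X \<subseteq> {1..n} - B" and Y: "Y \<subseteq> {1..n}" and mw: "(m,w) \<in> SS"
  shows "card {(m',w')\<in>SS. restrict m' X = restrict m X \<and> restrict w' Y = restrict w Y}
         = (card C div card (proj C (Y \<inter> (B \<union> X)))) * card A ^ card ({1..n} - B - X - Y)"
proof -
  obtain c where m: "m \<in> Ms" and c: "c \<in> C" and w: "w = Phi n B \<phi> m c" using mw SS_mem by blast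
  let ?N = "{1..n} - B"
  let ?Y' = "Y \<inter> (B \<union> X)"
  let ?F = "{c'\<in>C. \<forall>i\<in>?Y'. c' i = c i}"
  define H where "H c' i = (if i \<in> X then {m i} else if i \<in> Y then {v\<in>A. \<phi> (c' i) v = \<phi> (c i) (m i)} else A)" for c' i
  define G where "G c' = PiE ?N (H c')" for c'
  have BN: "B \<subseteq> {1..n}" by (rule B_sub)
  have HA: "H c' i \<subseteq> A" if "i \<in> ?N" for c' i
    using that X mA[OF m] unfolding H_def by auto
  have G_sub: "G c' \<subseteq> Ms" for c'
    unfolding G_def Ms_def by (rule PiE_mono) (rule HA)
  have PhiD: "Phi n B \<phi> m' c' i = (if i \<in> B then c' i else \<phi> (c' i) (m' i))" if "i \<in> {1..n}" for m' c' i
    using that by (simp add: Phi_def)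
  have eq: "{(m',w')\<in>SS. restrict m' X = restrict m X \<and> restrict w' Y = restrict w Y}
      = (\<lambda>(c',m'). (m', Phi n B \<phi> m' c')) ` (SIGMA c':?F. G c')" (is "?L = ?R")
  proof (rule set_eqI, rule iffI)
    fix x assume "x \<in> ?L"
    then obtain m' w' where x: "x = (m', w')" "(m',w') \<in> SS" "restrict m' X = restrict m X"
        "restrict w' Y = restrict w Y" by auto
    then obtain c' where m': "m' \<in> Ms" and c': "c' \<in> C" and w': "w' = Phi n B \<phi> m' c'" using SS_mem by blast
    have aX: "\<And>i. i \<in> X \<Longrightarrow> m' i = m i" using x(3) unfolding res_eq by blast
    have aY: "\<And>i. i \<in> Y \<Longrightarrow> Phi n B \<phi> m' c' i = Phi n B \<phi> m c i" using x(4) w w' unfolding res_eq by blast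
    have "\<forall>i\<in>?Y'. c' i = c i"
    proof
      fix i assume i: "i \<in> ?Y'"
      hence iE: "i \<in> {1..n}" using Y by auto
      show "c' i = c i"
      proof (cases "i \<in> B")
        case True thus ?thesis using aY[of i] i PhiD[OF iE] by simp
      next
        case False
        hence iX: "i \<in> X" using i by auto
        have "\<phi> (c' i) (m i) = \<phi> (c i) (m i)" using aY[of i] i PhiD[OF iE] False aX[OF iX] by simp
        moreover have "m i \<in> A" using mA[OF m] iE False by simp
        ultimately show ?thesis using phi_inj2 cA[OF c' iE] cA[OF c iE] by blast
      qed
    qed
    hence cF: "c' \<in> ?F" using c' by simp
    have "m' \<in> G c'"
      unfolding G_def PiE_iff
    proof (intro conjI ballI)
      fix i assume i: "i \<in> ?N"
      hence iE: "i \<in> {1..n}" and iB: "i \<notin> B" by auto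
      have mi: "m' i \<in> A" using mA[OF m' i] .
      show "m' i \<in> H c' i"
      proof (cases "i \<in> X")
        case True thus ?thesis unfolding H_def using aX by simp
      next
        case False
        show ?thesis
        proof (cases "i \<in> Y")
          case True
          have "\<phi> (c' i) (m' i) = \<phi> (c i) (m i)" using aY[OF True] PhiD[OF iE] iB by simp
          thus ?thesis unfolding H_def using False True mi by simp
        qed (use False mi in \<open>simp add: H_def\<close>)
      qed
    next
      show "m' \<in> extensional ?N" using m' unfolding Ms_def by (simp add: PiE_iff)
    qed
    thus "x \<in> ?R" using cF x(1) w' by force
  next
    fix x assume "x \<in> ?R"
    then obtain c' m' where x: "x = (m', Phi n B \<phi> m' c')" and cF: "c' \<in> ?F" and mG: "m' \<in> G c'" by auto
    have c': "c' \<in> C" and ag: "\<And>i. i \<in> ?Y' \<Longrightarrow> c' i = c i" using cF by auto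
    have m': "m' \<in> Ms" using G_sub mG by blast
    have mH: "\<And>i. i \<in> ?N \<Longrightarrow> m' i \<in> H c' i" using mG unfolding G_def by (simp add: PiE_iff)
    have aX: "\<forall>i\<in>X. m' i = m i"
    proof
      fix i assume i: "i \<in> X"
      hence "i \<in> ?N" using X by auto
      thus "m' i = m i" using mH[of i] i unfolding H_def by simp
    qed
    have aY: "\<forall>i\<in>Y. Phi n B \<phi> m' c' i = Phi n B \<phi> m c i"
    proof
      fix i assume i: "i \<in> Y"
      hence iE: "i \<in> {1..n}" using Y by auto
      show "Phi n B \<phi> m' c' i = Phi n B \<phi> m c i"
      proof (cases "i \<in> B")
        case True thus ?thesis using ag[of i] i PhiD[OF iE] by simp
      next
        case iB: False
        hence iN: "i \<in> ?N" using iE by simp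
        show ?thesis
        proof (cases "i \<in> X")
          case True thus ?thesis using ag[of i] i PhiD[OF iE] iB aX by simp
        next
          case False
          have "m' i \<in> {v\<in>A. \<phi> (c' i) v = \<phi> (c i) (m i)}" using mH[OF iN] False i unfolding H_def by simp
          thus ?thesis using PhiD[OF iE] iB by simp
        qed
      qed
    qed
    have "(m', Phi n B \<phi> m' c') \<in> SS" using SS_mem m' c' by blast
    thus "x \<in> ?L" using x aX aY w unfolding res_eq by simp
  qed
  have inj: "inj_on (\<lambda>(c',m'). (m', Phi n B \<phi> m' c')) (SIGMA c':?F. G c')"
  proof (rule inj_onI)
    fix a b assume a: "a \<in> (SIGMA c':?F. G c')" and b: "b \<in> (SIGMA c':?F. G c')"
      and e: "(\<lambda>(c',m'). (m', Phi n B \<phi> m' c')) a = (\<lambda>(c',m'). (m', Phi n B \<phi> m' c')) b"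
    obtain a1 a2 where ab: "a = (a1,a2)" by fastforce
    obtain b1 b2 where bb: "b = (b1,b2)" by fastforce
    have e2: "a2 = b2" "Phi n B \<phi> a2 a1 = Phi n B \<phi> a2 b1" using e ab bb by auto
    have "a2 \<in> Ms" using a ab G_sub by blast
    moreover have "a1 \<in> C" "b1 \<in> C" using a b ab bb by auto
    ultimately have "a1 = b1" using inj_onD[OF Phi_inj] e2(2) by blast
    thus "a = b" using ab bb e2(1) by simp
  qed
  have finF: "finite ?F" using finC by simp
  have cardG: "card (G c') = card A ^ card ({1..n} - B - X - Y)" if cF: "c' \<in> ?F" for c'
  proof -
    have c'C: "c' \<in> C" using cF by simp
    have "card (G c') = (\<Prod>i\<in>?N. card (H c' i))" unfolding G_def by (rule card_PiE) simp
    also have "\<dots> = (\<Prod>i\<in>?N. if i \<in> X \<or> i \<in> Y then 1 else card A)"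
    proof (rule prod.cong[OF refl])
      fix i assume i: "i \<in> ?N"
      hence iE: "i \<in> {1..n}" and iB: "i \<notin> B" by auto
      show "card (H c' i) = (if i \<in> X \<or> i \<in> Y then 1 else card A)"
      proof (cases "i \<in> X")
        case True thus ?thesis unfolding H_def by simp
      next
        case False
        have "\<phi> (c i) (m i) \<in> A" using phi_A cA[OF c iE] mA[OF m i] by blast
        hence "card {v\<in>A. \<phi> (c' i) v = \<phi> (c i) (m i)} = 1" using phi_solve cA[OF c'C iE] by blast
        thus ?thesis unfolding H_def using False by simp
      qed
    qed
    also have "\<dots> = (\<Prod>i\<in>?N \<inter> {i. i \<in> X \<or> i \<in> Y}. 1) * (\<Prod>i\<in>?N \<inter> - {i. i \<in> X \<or> i \<in> Y}. card A)"
      by (rule prod.If_cases) simp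
    also have "\<dots> = card A ^ card (?N \<inter> - {i. i \<in> X \<or> i \<in> Y})" by simp
    also have "?N \<inter> - {i. i \<in> X \<or> i \<in> Y} = {1..n} - B - X - Y" by auto
    finally show ?thesis .
  qed
  have "card ?L = card (SIGMA c':?F. G c')" unfolding eq by (rule card_image[OF inj])
  also have "\<dots> = (\<Sum>c'\<in>?F. card (G c'))" by (rule card_SigmaI) (use finF finite_subset[OF G_sub finMs] in auto)
  also have "\<dots> = card ?F * card A ^ card ({1..n} - B - X - Y)" using cardG by simp
  also have "card ?F = card C div card (proj C ?Y')"
  proof -
    have Y'E: "?Y' \<subseteq> {1..n}" using Y by auto
    show ?thesis using proj_pos[of ?Y'] by (simp flip: fiber[OF Y'E c])
  qed
  finally show ?thesis .
qed

end



theorem mainTheorem10: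
  fixes A :: "'a set" and n k :: nat and C :: "(nat \<Rightarrow> 'a) set" and B X Y :: "nat set"
    and \<phi> :: "'a \<Rightarrow> 'a \<Rightarrow> 'a"
  assumes "finite A" and "card A \<ge> 2"
    and "almost_affine A n k C"
    and "is_basis A n C B"
    and "\<forall>y \<in> A. bij_betw (\<lambda>x. \<phi> y x) A A \<and> bij_betw (\<lambda>x. \<phi> x y) A A"
    and "X \<subseteq> {1..n} - B" and "Y \<subseteq> {1..n}"
  shows "cond_entropy A n B \<phi> C X Y = real n - real k - real (card X) - rho A C B X Y"
proof -
  interpret aac A n k C B \<phi> using assms(1-5) by unfold_locales
  have X: "X \<subseteq> {1..n} - B" and Y: "Y \<subseteq> {1..n}" using assms(6,7) by auto
  define Y' where "Y' = Y \<inter> (B \<union> X)"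
  define e where "e = card ({1..n} - B - X - Y)"
  define c1 where "c1 = card C div card (proj C Y)"
  define c2 where "c2 = card C div card (proj C Y') * card A ^ e"
  have finXS: "finite (PiE X (\<lambda>_. A))" using finA finite_subset[OF X] by (simp add: finite_PiE)
  have finYS: "finite (PiE Y (\<lambda>_. A))" using finA finite_subset[OF Y] by (simp add: finite_PiE)
  have MSf: "m \<in> Ms \<and> restrict m X \<in> PiE X (\<lambda>_. A) \<and> restrict w Y \<in> PiE Y (\<lambda>_. A)" if mw: "(m,w) \<in> SS" for m w
  proof -
    obtain c where m: "m \<in> Ms" and c: "c \<in> C" and w: "w = Phi n B \<phi> m c" using mw SS_mem by blast
    have "\<forall>i\<in>X. m i \<in> A" using mA[OF m] X by auto
    moreover have "\<forall>i\<in>Y. w i \<in> A" using Phi_A[OF m c] Y w by auto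
    ultimately show ?thesis using m by (simp add: restrict_PiE_iff)
  qed
  have c1f: "card {(m',w')\<in>SS. m' = m \<and> restrict m' X = restrict m X \<and> restrict w' Y = restrict w Y} = c1"
    if "(m,w) \<in> SS" for m w
    unfolding c1_def by (rule c1_lem[OF Y that])
  have c2f: "card {(m',w')\<in>SS. restrict m' X = restrict m X \<and> restrict w' Y = restrict w Y} = c2"
    if "(m,w) \<in> SS" for m w
    unfolding c2_def Y'_def e_def by (rule c2_lem[OF X Y that])
  note E0 = entropy_uniform[where b="real (card A)", OF finSS set_P pmf_P finMs finXS finYS MSf c1f c2f refl refl]
  have E: "cond_entropy A n B \<phi> C X Y = log (real (card A)) (real c2 / real c1)"
    unfolding cond_entropy_def Let_def Ms_def[symmetric] by (rule E0)
  have Y'E: "Y' \<subseteq> {1..n}" using Y unfolding Y'_def by auto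
  obtain c0 where c0: "c0 \<in> C" using Cne by blast
  have dv1: "card (proj C Y) dvd card C"
  proof -
    have "card (proj C Y) dvd card {c'\<in>C. \<forall>i\<in>Y. c' i = c0 i} * card (proj C Y)" by simp
    thus ?thesis by (simp only: fiber[OF Y c0])
  qed
  have dv2: "card (proj C Y') dvd card C"
  proof -
    have "card (proj C Y') dvd card {c'\<in>C. \<forall>i\<in>Y'. c' i = c0 i} * card (proj C Y')" by simp
    thus ?thesis by (simp only: fiber[OF Y'E c0])
  qed
  define pY where "pY = real (card (proj C Y))"
  define pY' where "pY' = real (card (proj C Y'))"
  define a where "a = real (card A)"
  define CC where "CC = real (card C)"
  have pYp: "pY > 0" unfolding pY_def using proj_pos by simp
  have pY'p: "pY' > 0" unfolding pY'_def using proj_pos by simp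
  have ap: "a > 1" unfolding a_def using a2 by simp
  have CCp: "CC > 0" unfolding CC_def using finC Cne by (simp add: card_gt_0_iff)
  have r1: "real c1 = CC / pY" unfolding c1_def CC_def pY_def by (rule real_of_nat_div[OF dv1])
  have r2: "real c2 = CC / pY' * a ^ e" unfolding c2_def CC_def pY'_def a_def
    using real_of_nat_div[OF dv2] by simp
  have ratio: "real c2 / real c1 = a ^ e * (pY / pY')" unfolding r1 r2
    using pYp pY'p CCp by (simp add: field_simps)
  have lg: "log a (a ^ e * (pY / pY')) = real e + (log a pY - log a pY')"
  proof -
    have "log a (a ^ e * (pY / pY')) = log a (a ^ e) + log a (pY / pY')"
      by (subst log_mult) (use ap pYp pY'p in simp)
    also have "log a (a ^ e) = real e" using ap by (simp add: log_nat_power)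
    also have "log a (pY / pY') = log a pY - log a pY'" using pYp pY'p by (simp add: log_divide)
    finally show ?thesis .
  qed
  have rh: "rho A C B X Y = real (card (Y - (B \<union> X))) + log a pY' - log a pY"
    unfolding rho_def rank_D_def code_rank_def a_def pY_def pY'_def Y'_def by simp
  have BE: "B \<subseteq> {1..n}" by (rule B_sub)
  have s1: "{1..n} - B - X - Y = ({1..n} - B - X) - (Y - (B \<union> X))" using Y by auto
  have s2: "Y - (B \<union> X) \<subseteq> {1..n} - B - X" using Y by auto
  have f1: "finite (Y - (B \<union> X))" using finite_subset[OF Y] by simp
  have ce1: "card ({1..n} - B - X - Y) = card ({1..n} - B - X) - card (Y - (B \<union> X))"
    unfolding s1 by (rule card_Diff_subset[OF f1 s2])
  have le1: "card (Y - (B \<union> X)) \<le> card ({1..n} - B - X)" by (rule card_mono[OF _ s2]) simp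
  have ce2: "card ({1..n} - B - X) = card ({1..n} - B) - card X"
    by (rule card_Diff_subset[OF finite_subset[OF X finite_Diff[OF finite_atLeastAtMost]] X])
  have le2: "card X \<le> card ({1..n} - B)" by (rule card_mono[OF finite_Diff[OF finite_atLeastAtMost] X])
  have ce3: "card ({1..n} - B) = n - k"
    using card_Diff_subset[OF finite_subset[OF BE] BE] cardB by simp
  have le3: "k \<le> n" using card_mono[OF _ BE] cardB by simp
  have re: "real e = real n - real k - real (card X) - real (card (Y - (B \<union> X)))"
    unfolding e_def ce1 using le1 le2 le3 ce2 ce3 by (simp add: of_nat_diff)
  show ?thesis unfolding E ratio a_def[symmetric] lg rh re by linarith
qed



end
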